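(* Assume monotone treatment response, $Y(1)\ge Y(0)$ almost surely (equivalently $p_{10}=0$). Then, for every $a\in\mathcal A$ (assuming the conditioning events have positive probability and the denominators below are nonzero), $$\mathrm{TPR}_a=\frac{\mathbb E[\tau\mid A=a,Z=1]\,\mathbb P(Z=1\mid A=a)}{\mathbb E[\tau\mid A=a]},\qquad \mathrm{TNR}_a=\frac{\mathbb E[1-\tau\mid A=a,Z=0]\,\mathbb P(Z=0\mid A=a)}{\mathbb E[1-\tau\mid A=a]}.$$ In particular $\mathrm{TPR}_a,\mathrm{TNR}_a$ are identified from the distribution of $(X,A,T,Y)$.
   Context: Data consist of features $X\in\mathcal X$, a sensitive attribute $A$ in a finite set $\mathcal A$, binary treatment $T\in\{0,1\}$ and binary outcome $Y\in\{0,1\}$, with potential outcomes $Y(0),Y(1)\in\{0,1\}$, $Y=Y(T)$, and ignorability $(Y(0),Y(1))\perp T\mid X,A$ (with $\mathbb P(T=t\mid X,A)>0$ for $t=0,1$). Let $p_{ij}=p_{ij}(X,A)=\mathbb P(Y(0)=i,Y(1)=j\mid X,A)$. The conditional average treatment effect is $\tau=\tau(X,A)=\mathbb E[Y(1)-Y(0)\mid X,A]=p_{01}-p_{10}=\mathbb P(Y=1\mid T=1,X,A)-\mathbb P(Y=1\mid T=0,X,A)$. A policy is $Z=Z(X,A)\in\{0,1\}$. $\mathrm{TPR}_a=\mathbb P(Z=1\mid A=a,Y(1)>Y(0))$, $\mathrm{TNR}_a=\mathbb P(Z=0\mid A=a,Y(1)\le Y(0))$. *)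

theory Defs
  imports "HOL-Probability.Probability"
begin

definition cprob :: "'a measure \<Rightarrow> 'a set \<Rightarrow> 'a set \<Rightarrow> real" where
  "cprob M E B = measure M (E \<inter> B) / measure M B"

definition cexp_ev :: "'a measure \<Rightarrow> ('a \<Rightarrow> real) \<Rightarrow> 'a set \<Rightarrow> real" where
  "cexp_ev M f B = (\<integral>\<omega>. indicator B \<omega> * f \<omega> \<partial>M) / measure M B"

definition sigXA :: "'a measure \<Rightarrow> 'x measure \<Rightarrow> ('a \<Rightarrow> 'x) \<Rightarrow> ('a \<Rightarrow> 'c) \<Rightarrow> 'a measure" where
  "sigXA M MX X A = vimage_algebra (space M) (\<lambda>\<omega>. (X \<omega>, A \<omega>)) (MX \<Otimes>\<^sub>M count_space UNIV)"

definition cate :: "'a measure \<Rightarrow> 'x measure \<Rightarrow> ('a \<Rightarrow> 'x) \<Rightarrow> ('a \<Rightarrow> 'c)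
    \<Rightarrow> ('a \<Rightarrow> real) \<Rightarrow> ('a \<Rightarrow> real) \<Rightarrow> 'a \<Rightarrow> real" where
  "cate M MX X A Y0 Y1 = real_cond_exp M (sigXA M MX X A) (\<lambda>\<omega>. Y1 \<omega> - Y0 \<omega>)"

definition TPR :: "'a measure \<Rightarrow> ('a \<Rightarrow> 'x) \<Rightarrow> ('a \<Rightarrow> 'c) \<Rightarrow> ('x \<Rightarrow> 'c \<Rightarrow> bool)
    \<Rightarrow> ('a \<Rightarrow> real) \<Rightarrow> ('a \<Rightarrow> real) \<Rightarrow> 'c \<Rightarrow> real" where
  "TPR M X A Z Y0 Y1 a = cprob M {\<omega>\<in>space M. Z (X \<omega>) (A \<omega>)}
      {\<omega>\<in>space M. A \<omega> = a \<and> Y1 \<omega> > Y0 \<omega>}"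

definition TNR :: "'a measure \<Rightarrow> ('a \<Rightarrow> 'x) \<Rightarrow> ('a \<Rightarrow> 'c) \<Rightarrow> ('x \<Rightarrow> 'c \<Rightarrow> bool)
    \<Rightarrow> ('a \<Rightarrow> real) \<Rightarrow> ('a \<Rightarrow> real) \<Rightarrow> 'c \<Rightarrow> real" where
  "TNR M X A Z Y0 Y1 a = cprob M {\<omega>\<in>space M. \<not> Z (X \<omega>) (A \<omega>)}
      {\<omega>\<in>space M. A \<omega> = a \<and> Y1 \<omega> \<le> Y0 \<omega>}"

end

theory Submission
  imports Defs
begin

theorem proposition2:
  fixes M :: "'a measure" and MX :: "'x measure"
    and X :: "'a \<Rightarrow> 'x" and A :: "'a \<Rightarrow> 'c::finite"
    and Y0 Y1 :: "'a \<Rightarrow> real" and Z :: "'x \<Rightarrow> 'c \<Rightarrow> bool" and a :: 'c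
  defines "\<tau> \<equiv> cate M MX X A Y0 Y1"
    and "EA \<equiv> {\<omega>\<in>space M. A \<omega> = a}"
    and "EZ1 \<equiv> {\<omega>\<in>space M. Z (X \<omega>) (A \<omega>)}"
    and "EZ0 \<equiv> {\<omega>\<in>space M. \<not> Z (X \<omega>) (A \<omega>)}"
  assumes "prob_space M"
    and "X \<in> M \<rightarrow>\<^sub>M MX"
    and "A \<in> M \<rightarrow>\<^sub>M count_space UNIV"
    and "Y0 \<in> borel_measurable M" and "Y1 \<in> borel_measurable M"
    and "\<forall>\<omega>\<in>space M. Y0 \<omega> \<in> {0, 1} \<and> Y1 \<omega> \<in> {0, 1}"
    and "(\<lambda>(x, c). Z x c) \<in> MX \<Otimes>\<^sub>M count_space UNIV \<rightarrow>\<^sub>M count_space UNIV"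
    \<comment> \<open>monotone treatment response\<close>
    and "AE \<omega> in M. Y1 \<omega> \<ge> Y0 \<omega>"
    \<comment> \<open>conditioning events have positive probability, denominators nonzero\<close>
    and "measure M EA > 0"
    and "measure M (EA \<inter> EZ1) > 0" and "measure M (EA \<inter> EZ0) > 0"
    and "measure M {\<omega>\<in>space M. A \<omega> = a \<and> Y1 \<omega> > Y0 \<omega>} > 0"
    and "measure M {\<omega>\<in>space M. A \<omega> = a \<and> Y1 \<omega> \<le> Y0 \<omega>} > 0"
    and "cexp_ev M \<tau> EA \<noteq> 0"
    and "cexp_ev M (\<lambda>\<omega>. 1 - \<tau> \<omega>) EA \<noteq> 0"
  shows "TPR M X A Z Y0 Y1 a =
           cexp_ev M \<tau> (EA \<inter> EZ1) * cprob M EZ1 EA / cexp_ev M \<tau> EA \<and>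
         TNR M X A Z Y0 Y1 a =
           cexp_ev M (\<lambda>\<omega>. 1 - \<tau> \<omega>) (EA \<inter> EZ0) * cprob M EZ0 EA
             / cexp_ev M (\<lambda>\<omega>. 1 - \<tau> \<omega>) EA"
proof -
  interpret prob_space M by fact
  note [measurable] = assms(6,7,8,9)
  define N where "N = MX \<Otimes>\<^sub>M count_space (UNIV::'c set)"
  define F where "F = sigXA M MX X A"
  define g where "g = (\<lambda>\<omega>. (X \<omega>, A \<omega>))"
  have gm: "g \<in> M \<rightarrow>\<^sub>M N" unfolding g_def N_def by measurable
  have Zm[measurable]: "(\<lambda>(x, c). Z x c) \<in> N \<rightarrow>\<^sub>M count_space UNIV"
    using assms(11) unfolding N_def .
  have F_eq: "F = vimage_algebra (space M) g N" unfolding F_def sigXA_def g_def N_def by simp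
  have subalg: "subalgebra M F"
    unfolding subalgebra_def F_eq
  proof
    show "sets (vimage_algebra (space M) g N) \<subseteq> sets M"
      unfolding sets_vimage_algebra
      apply (rule sets.sigma_sets_subset)
      using gm by (auto simp: measurable_def)
  qed simp
  interpret sigma_finite_subalgebra M F
    using finite_measure_subalgebra_is_sigma_finite[of M F] subalg
    by (simp add: finite_measure_axioms finite_measure_subalgebra_axioms_def finite_measure_subalgebra_def)
  have inF: "g -` B \<inter> space M \<in> sets F" if "B \<in> sets N" for B
    unfolding F_eq using that by (rule in_vimage_algebra)
  have tau: "\<tau> = real_cond_exp M F (\<lambda>\<omega>. Y1 \<omega> - Y0 \<omega>)"
    unfolding \<tau>_def cate_def F_def ..
  define Dp where "Dp = {\<omega>\<in>space M. Y1 \<omega> > Y0 \<omega>}"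
  define Dn where "Dn = {\<omega>\<in>space M. Y1 \<omega> \<le> Y0 \<omega>}"
  have intD: "integrable M (\<lambda>\<omega>. Y1 \<omega> - Y0 \<omega>)"
    apply (rule integrable_const_bound[where B=1])
    using assms(10) by (auto intro!: AE_I2)
  have AEd: "AE \<omega> in M. Y1 \<omega> - Y0 \<omega> = indicator Dp \<omega>"
    using assms(12)
  proof (rule AE_mp)
    show "AE \<omega> in M. Y0 \<omega> \<le> Y1 \<omega> \<longrightarrow> Y1 \<omega> - Y0 \<omega> = indicator Dp \<omega>"
      using assms(10) unfolding Dp_def by (intro AE_I2) (auto split: split_indicator)
  qed
  have key: "(\<integral>\<omega>. indicator S \<omega> * \<tau> \<omega> \<partial>M) = measure M (S \<inter> Dp) \<and>
        (\<integral>\<omega>. indicator S \<omega> * (1 - \<tau> \<omega>) \<partial>M) = measure M (S \<inter> Dn)" if S: "S \<in> sets F" for S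
  proof -
    have SM[measurable]: "S \<in> sets M" using subalg S by (auto simp: subalgebra_def)
    have DpM[measurable]: "Dp \<in> sets M" unfolding Dp_def by measurable
    have intT: "integrable M \<tau>" unfolding tau using intD by (rule real_cond_exp_int(1))
    have 1: "(\<integral>\<omega>. indicator S \<omega> * \<tau> \<omega> \<partial>M) = (\<integral>\<omega>. indicator S \<omega> * (Y1 \<omega> - Y0 \<omega>) \<partial>M)"
      using real_cond_exp_intA[OF intD S] unfolding tau set_lebesgue_integral_def by simp
    have 2: "(\<integral>\<omega>. indicator S \<omega> * (Y1 \<omega> - Y0 \<omega>) \<partial>M) = (\<integral>\<omega>. indicator (S \<inter> Dp) \<omega> \<partial>M)"
      apply (rule integral_cong_AE)
        apply measurable
      using AEd by eventually_elim (auto split: split_indicator)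
    have A1: "(\<integral>\<omega>. indicator S \<omega> * \<tau> \<omega> \<partial>M) = measure M (S \<inter> Dp)"
      using 1 2 by simp
    have "(\<integral>\<omega>. indicator S \<omega> * (1 - \<tau> \<omega>) \<partial>M)
        = (\<integral>\<omega>. indicator S \<omega> \<partial>M) - (\<integral>\<omega>. indicator S \<omega> * \<tau> \<omega> \<partial>M)"
    proof -
      have i1: "integrable M (\<lambda>\<omega>. indicator S \<omega> :: real)" using SM by (simp add: integrable_indicator_iff less_top[symmetric])
      have i2: "integrable M (\<lambda>\<omega>. indicator S \<omega> * \<tau> \<omega>)"
        using integrable_mult_indicator[OF SM intT] by simp
      have "(\<integral>\<omega>. indicator S \<omega> * (1 - \<tau> \<omega>) \<partial>M) = (\<integral>\<omega>. indicator S \<omega> - indicator S \<omega> * \<tau> \<omega> \<partial>M)"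
        by (simp add: algebra_simps)
      also have "\<dots> = (\<integral>\<omega>. indicator S \<omega> \<partial>M) - (\<integral>\<omega>. indicator S \<omega> * \<tau> \<omega> \<partial>M)"
        by (rule Bochner_Integration.integral_diff[OF i1 i2])
      finally show ?thesis .
    qed
    also have "\<dots> = measure M S - measure M (S \<inter> Dp)" using A1 by simp
    also have "\<dots> = measure M (S \<inter> Dn)"
    proof -
      have "S \<inter> Dn = S - (S \<inter> Dp)" using sets.sets_into_space[OF SM] unfolding Dn_def Dp_def by auto
      then show ?thesis by (simp add: finite_measure_Diff)
    qed
    finally show ?thesis using A1 by simp
  qed
  have gsp: "(X \<omega>, A \<omega>) \<in> space N" if "\<omega> \<in> space M" for \<omega>
    using measurable_space[OF gm that] unfolding g_def .
  have Zs: "{p\<in>space N. (\<lambda>(x, c). Z x c) p} \<in> sets N"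
  proof -
    have "{p\<in>space N. (\<lambda>(x, c). Z x c) p} = (\<lambda>(x, c). Z x c) -` {True} \<inter> space N" by auto
    then show ?thesis using measurable_sets[OF Zm, of "{True}"] by simp
  qed
  have Zs0: "{p\<in>space N. \<not> (\<lambda>(x, c). Z x c) p} \<in> sets N"
  proof -
    have "{p\<in>space N. \<not> (\<lambda>(x, c). Z x c) p} = (\<lambda>(x, c). Z x c) -` {False} \<inter> space N" by auto
    then show ?thesis using measurable_sets[OF Zm, of "{False}"] by simp
  qed
  have As: "{p\<in>space N. snd p = a} \<in> sets N" unfolding N_def by measurable
  have EAF: "EA \<in> sets F"
  proof -
    have "EA = g -` {p\<in>space N. snd p = a} \<inter> space M" unfolding EA_def g_def using gsp by auto
    moreover have "{p\<in>space N. snd p = a} \<in> sets N" unfolding N_def by measurable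
    ultimately show ?thesis using inF by metis
  qed
  have EZ1F: "EA \<inter> EZ1 \<in> sets F"
  proof -
    have "EA \<inter> EZ1 = g -` {p\<in>space N. snd p = a \<and> (\<lambda>(x, c). Z x c) p} \<inter> space M"
      unfolding EA_def EZ1_def g_def using gsp by auto
    moreover have "{p\<in>space N. snd p = a \<and> (\<lambda>(x, c). Z x c) p} = {p\<in>space N. snd p = a} \<inter> {p\<in>space N. (\<lambda>(x, c). Z x c) p}" by auto
    then have "{p\<in>space N. snd p = a \<and> (\<lambda>(x, c). Z x c) p} \<in> sets N" using As Zs by auto
    ultimately show ?thesis using inF by metis
  qed
  have EZ0F: "EA \<inter> EZ0 \<in> sets F"
  proof -
    have "EA \<inter> EZ0 = g -` {p\<in>space N. snd p = a \<and> \<not> (\<lambda>(x, c). Z x c) p} \<inter> space M"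
      unfolding EA_def EZ0_def g_def using gsp by auto
    moreover have "{p\<in>space N. snd p = a \<and> \<not> (\<lambda>(x, c). Z x c) p} = {p\<in>space N. snd p = a} \<inter> {p\<in>space N. \<not> (\<lambda>(x, c). Z x c) p}" by auto
    then have "{p\<in>space N. snd p = a \<and> \<not> (\<lambda>(x, c). Z x c) p} \<in> sets N" using As Zs0 by auto
    ultimately show ?thesis using inF by metis
  qed
  have e1: "{\<omega>\<in>space M. A \<omega> = a \<and> Y1 \<omega> > Y0 \<omega>} = EA \<inter> Dp" unfolding EA_def Dp_def by auto
  have e2: "{\<omega>\<in>space M. A \<omega> = a \<and> Y1 \<omega> \<le> Y0 \<omega>} = EA \<inter> Dn" unfolding EA_def Dn_def by auto
  have e3: "EZ1 \<inter> (EA \<inter> Dp) = (EA \<inter> EZ1) \<inter> Dp" by auto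
  have e4: "EZ0 \<inter> (EA \<inter> Dn) = (EA \<inter> EZ0) \<inter> Dn" by auto
  have e5: "EZ1 \<inter> EA = EA \<inter> EZ1" "EZ0 \<inter> EA = EA \<inter> EZ0" by auto
  have p1: "measure M (EA \<inter> EZ1) \<noteq> 0" "measure M EA \<noteq> 0" "measure M (EA \<inter> EZ0) \<noteq> 0"
    using assms(13,14,15) by auto
  have k1: "(\<integral>\<omega>. indicator EA \<omega> * \<tau> \<omega> \<partial>M) = measure M (EA \<inter> Dp)"
       "(\<integral>\<omega>. indicator EA \<omega> * (1 - \<tau> \<omega>) \<partial>M) = measure M (EA \<inter> Dn)"
    using key[OF EAF] by auto
  have k2: "(\<integral>\<omega>. indicator (EA \<inter> EZ1) \<omega> * \<tau> \<omega> \<partial>M) = measure M (EA \<inter> EZ1 \<inter> Dp)"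
    using key[OF EZ1F] by auto
  have k3: "(\<integral>\<omega>. indicator (EA \<inter> EZ0) \<omega> * (1 - \<tau> \<omega>) \<partial>M) = measure M (EA \<inter> EZ0 \<inter> Dn)"
    using key[OF EZ0F] by auto
  have T1: "TPR M X A Z Y0 Y1 a = measure M (EA \<inter> EZ1 \<inter> Dp) / measure M (EA \<inter> Dp)"
    unfolding TPR_def cprob_def EZ1_def[symmetric] e1 e3 ..
  have T2: "TNR M X A Z Y0 Y1 a = measure M (EA \<inter> EZ0 \<inter> Dn) / measure M (EA \<inter> Dn)"
    unfolding TNR_def cprob_def EZ0_def[symmetric] e2 e4 ..
  show ?thesis
    unfolding T1 T2 cexp_ev_def cprob_def k1 k2 k3 e5
    using p1 by (simp add: field_simps)
qed

end
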